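(* Let $\Omega=\{(x-a_1)^{r_1},\dots,(x-a_n)^{r_n}\}$ and $\Psi=\{(x-b_1)^{s_1},\dots,(x-b_m)^{s_m}\}$ be P-independent subsets of $\mathbb{F}[x;\sigma,\delta]$ of sizes $n,m\in\mathbb{Z}_+$ respectively, where $a_i,b_j\in\mathbb{F}$ and $r_i,s_j\in\mathbb{Z}_+$. If no element of $\{a_1,\dots,a_n\}$ is $(\sigma,\delta)$-conjugate to an element of $\{b_1,\dots,b_m\}$, then $\Omega\cup\Psi$ has size $n+m$ and is P-independent.
   Context: Let $\mathbb{F}$ be a division ring, $\sigma$ a ring endomorphism of $\mathbb{F}$ and $\delta$ a $\sigma$-derivation; $\mathbb{F}[x;\sigma,\delta]$ is the skew polynomial ring with $xa=\sigma(a)x+\delta(a)$. Elements $a,b\in\mathbb{F}$ are $(\sigma,\delta)$-conjugate if $b=a^\beta:=\sigma(\beta)a\beta^{-1}+\delta(\beta)\beta^{-1}$ for some $\beta\in\mathbb{F}^*$. For a set $\Omega$ of skew polynomials, $I(\Omega)$ is the left ideal of skew polynomials right-divisible by every element of $\Omega$ and $F_\Omega$ its monic generator of minimal degree (or $0$). $\Omega$ is P-independent if it is finite, $I(\Omega)\ne\{0\}$ and $\deg F_\Omega=\sum_{P\in\Omega}\deg P$. *)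

theory Defs
  imports "HOL-Computational_Algebra.Polynomial"
begin

text \<open>Skew polynomials F[x; sigma, delta] over a division ring are represented by the
 type 'a poly (coefficient sequences, written with coefficients on the left:
 sum of c_k x^k); only the additive structure of 'a poly is used, the
 multiplication is the skew multiplication defined below, determined by
 x a = sigma(a) x + delta(a).\<close>

definition ring_endo :: "('a::division_ring \<Rightarrow> 'a) \<Rightarrow> bool" where
  "ring_endo \<sigma> \<longleftrightarrow> (\<forall>a b. \<sigma> (a + b) = \<sigma> a + \<sigma> b) \<and> (\<forall>a b. \<sigma> (a * b) = \<sigma> a * \<sigma> b) \<and> \<sigma> 1 = 1"

definition sigma_derivation :: "('a::division_ring \<Rightarrow> 'a) \<Rightarrow> ('a \<Rightarrow> 'a) \<Rightarrow> bool" where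
  "sigma_derivation \<sigma> \<delta> \<longleftrightarrow> (\<forall>a b. \<delta> (a + b) = \<delta> a + \<delta> b) \<and>
      (\<forall>a b. \<delta> (a * b) = \<sigma> a * \<delta> b + \<delta> a * b)"

text \<open>left multiplication by x: x * (sum c_k x^k) = sum (sigma(c_k) x^(k+1) + delta(c_k) x^k)\<close>
definition skew_x :: "('a::division_ring \<Rightarrow> 'a) \<Rightarrow> ('a \<Rightarrow> 'a) \<Rightarrow> 'a poly \<Rightarrow> 'a poly" where
  "skew_x \<sigma> \<delta> p = pCons 0 (map_poly \<sigma> p) + map_poly \<delta> p"

definition lmult :: "'a::division_ring \<Rightarrow> 'a poly \<Rightarrow> 'a poly" where
  "lmult a p = map_poly (\<lambda>c. a * c) p"

text \<open>right multiplication by x^j\<close>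
definition shiftr :: "nat \<Rightarrow> 'a::division_ring poly \<Rightarrow> 'a poly" where
  "shiftr j p = (pCons 0 ^^ j) p"

text \<open>skew product: (c_i x^i)(d_j x^j) = c_i (x^i d_j) x^j\<close>
definition skew_mult :: "('a::division_ring \<Rightarrow> 'a) \<Rightarrow> ('a \<Rightarrow> 'a) \<Rightarrow> 'a poly \<Rightarrow> 'a poly \<Rightarrow> 'a poly" where
  "skew_mult \<sigma> \<delta> p q = (\<Sum>i\<le>degree p. \<Sum>j\<le>degree q.
      shiftr j (lmult (coeff p i) ((skew_x \<sigma> \<delta> ^^ i) [:coeff q j:])))"

fun skew_pow :: "('a::division_ring \<Rightarrow> 'a) \<Rightarrow> ('a \<Rightarrow> 'a) \<Rightarrow> 'a poly \<Rightarrow> nat \<Rightarrow> 'a poly" where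
  "skew_pow \<sigma> \<delta> p 0 = [:1:]"
| "skew_pow \<sigma> \<delta> p (Suc k) = skew_mult \<sigma> \<delta> (skew_pow \<sigma> \<delta> p k) p"

definition sd_conj :: "('a::division_ring \<Rightarrow> 'a) \<Rightarrow> ('a \<Rightarrow> 'a) \<Rightarrow> 'a \<Rightarrow> 'a \<Rightarrow> 'a" where
  "sd_conj \<sigma> \<delta> a \<beta> = \<sigma> \<beta> * a * inverse \<beta> + \<delta> \<beta> * inverse \<beta>"

definition sd_conjugate :: "('a::division_ring \<Rightarrow> 'a) \<Rightarrow> ('a \<Rightarrow> 'a) \<Rightarrow> 'a \<Rightarrow> 'a \<Rightarrow> bool" where
  "sd_conjugate \<sigma> \<delta> a b \<longleftrightarrow> (\<exists>\<beta>. \<beta> \<noteq> 0 \<and> b = sd_conj \<sigma> \<delta> a \<beta>)"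

definition right_dvd :: "('a::division_ring \<Rightarrow> 'a) \<Rightarrow> ('a \<Rightarrow> 'a) \<Rightarrow> 'a poly \<Rightarrow> 'a poly \<Rightarrow> bool" where
  "right_dvd \<sigma> \<delta> P F \<longleftrightarrow> (\<exists>Q. F = skew_mult \<sigma> \<delta> Q P)"

definition ideal_of :: "('a::division_ring \<Rightarrow> 'a) \<Rightarrow> ('a \<Rightarrow> 'a) \<Rightarrow> 'a poly set \<Rightarrow> 'a poly set" where
  "ideal_of \<sigma> \<delta> \<Omega> = {F. \<forall>P\<in>\<Omega>. right_dvd \<sigma> \<delta> P F}"

definition min_poly :: "('a::division_ring \<Rightarrow> 'a) \<Rightarrow> ('a \<Rightarrow> 'a) \<Rightarrow> 'a poly set \<Rightarrow> 'a poly" where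
  "min_poly \<sigma> \<delta> \<Omega> = (if ideal_of \<sigma> \<delta> \<Omega> = {0} then 0 else
     (SOME F. F \<in> ideal_of \<sigma> \<delta> \<Omega> \<and> lead_coeff F = 1 \<and>
        (\<forall>G\<in>ideal_of \<sigma> \<delta> \<Omega>. G \<noteq> 0 \<longrightarrow> degree F \<le> degree G)))"

definition P_independent :: "('a::division_ring \<Rightarrow> 'a) \<Rightarrow> ('a \<Rightarrow> 'a) \<Rightarrow> 'a poly set \<Rightarrow> bool" where
  "P_independent \<sigma> \<delta> \<Omega> \<longleftrightarrow> finite \<Omega> \<and> ideal_of \<sigma> \<delta> \<Omega> \<noteq> {0} \<and>
     degree (min_poly \<sigma> \<delta> \<Omega>) = (\<Sum>P\<in>\<Omega>. degree P)"

end

theory Submission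
  imports Defs
begin



lemma additive_sum:
  fixes f :: "'b::comm_monoid_add \<Rightarrow> 'c::ab_group_add"
  assumes add: "\<And>x y. f (x+y) = f x + f y"
  shows "f (sum g A) = (\<Sum>a\<in>A. f (g a))"
proof -
  have f0: "f 0 = 0" using add[of 0 0] by simp
  show ?thesis
  proof (cases "finite A")
    case True then show ?thesis by (induction A rule: finite_induct) (auto simp: f0 add)
  qed (simp add: f0)
qed

lemma self_add_zero: "(x::'b::ab_group_add) = x + x \<Longrightarrow> x = 0"
  by (metis add_cancel_right_right)

locale sd =
  fixes \<sigma> \<delta> :: "'a::division_ring \<Rightarrow> 'a"
  assumes endo: "ring_endo \<sigma>" and der: "sigma_derivation \<sigma> \<delta>"
begin

lemma s_add: "\<sigma> (a+b) = \<sigma> a + \<sigma> b" using endo by (simp add: ring_endo_def)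
lemma s_mult: "\<sigma> (a*b) = \<sigma> a * \<sigma> b" using endo by (simp add: ring_endo_def)
lemma s_one[simp]: "\<sigma> 1 = 1" using endo by (simp add: ring_endo_def)
lemma d_add: "\<delta> (a+b) = \<delta> a + \<delta> b" using der by (simp add: sigma_derivation_def)
lemma d_mult: "\<delta> (a*b) = \<sigma> a * \<delta> b + \<delta> a * b" using der by (simp add: sigma_derivation_def)
lemma s_zero[simp]: "\<sigma> 0 = 0" by (rule self_add_zero) (metis s_add add_0)
lemma d_zero[simp]: "\<delta> 0 = 0" by (rule self_add_zero) (metis d_add add_0)
lemma s_minus: "\<sigma> (-a) = - \<sigma> a"
proof -
  have "\<sigma> a + \<sigma> (-a) = 0" by (simp add: s_add[symmetric])
  then show ?thesis by (rule minus_unique[symmetric])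
qed
lemma d_minus: "\<delta> (-a) = - \<delta> a"
proof -
  have "\<delta> a + \<delta> (-a) = 0" by (simp add: d_add[symmetric])
  then show ?thesis by (rule minus_unique[symmetric])
qed
lemma s_diff: "\<sigma> (a-b) = \<sigma> a - \<sigma> b" by (metis diff_conv_add_uminus s_add s_minus)
lemma d_diff: "\<delta> (a-b) = \<delta> a - \<delta> b" by (metis diff_conv_add_uminus d_add d_minus)
lemma d_one[simp]: "\<delta> 1 = 0" by (rule self_add_zero) (metis d_mult s_one mult_1_left mult_1_right)
lemma s_eq0: "\<sigma> a = 0 \<Longrightarrow> a = 0"
  by (metis s_mult s_one right_inverse mult_zero_left zero_neq_one)
lemma spow_eq0: "(\<sigma>^^k) a = 0 \<Longrightarrow> a = 0"
  by (induction k) (auto dest: s_eq0)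
lemma spow_one[simp]: "(\<sigma>^^k) 1 = 1"
  by (induction k) auto

end

definition act :: "('a::zero \<Rightarrow> 'm \<Rightarrow> 'm) \<Rightarrow> ('m \<Rightarrow> 'm) \<Rightarrow> 'a poly \<Rightarrow> 'm \<Rightarrow> 'm::comm_monoid_add" where
  "act sm T p m = (\<Sum>i\<le>degree p. sm (coeff p i) ((T^^i) m))"

locale rep = sd \<sigma> \<delta> for \<sigma> \<delta> :: "'a::division_ring \<Rightarrow> 'a" +
  fixes sm :: "'a \<Rightarrow> 'm::ab_group_add \<Rightarrow> 'm" and T :: "'m \<Rightarrow> 'm"
  assumes sm_addr: "sm u (x+y) = sm u x + sm u y"
    and sm_addl: "sm (u+v) x = sm u x + sm v x"
    and sm_assoc: "sm u (sm v x) = sm (u*v) x"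
    and sm_one: "sm 1 x = x"
    and T_add: "T (x+y) = T x + T y"
    and T_sm: "T (sm u x) = sm (\<sigma> u) (T x) + sm (\<delta> u) x"
begin

lemma sm_zl[simp]: "sm 0 x = 0" by (rule self_add_zero) (metis sm_addl add_0)
lemma sm_zr[simp]: "sm u 0 = 0" by (rule self_add_zero) (metis sm_addr add_0)
lemma T_zero[simp]: "T 0 = 0" by (rule self_add_zero) (metis T_add add_0)
lemma Tp_add: "(T^^i) (x+y) = (T^^i) x + (T^^i) y"
  by (induction i) (auto simp: T_add)

lemma act_bound: "degree p \<le> N \<Longrightarrow> act sm T p m = (\<Sum>i\<le>N. sm (coeff p i) ((T^^i) m))"
  unfolding act_def
  by (rule sum.mono_neutral_left) (auto simp: coeff_eq_0)

lemma act_add_p: "act sm T (p+q) m = act sm T p m + act sm T q m"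
proof -
  let ?N = "max (degree p) (degree q)"
  have "degree (p+q) \<le> ?N" by (rule degree_add_le) auto
  then show ?thesis
    by (simp add: act_bound[of _ ?N] sum.distrib[symmetric] sm_addl)
qed

lemma act_0p[simp]: "act sm T 0 m = 0" by (simp add: act_def)

lemma act_minus_p: "act sm T (-p) m = - act sm T p m"
proof -
  have "act sm T p m + act sm T (-p) m = 0" by (simp add: act_add_p[symmetric])
  then show ?thesis by (rule minus_unique[symmetric])
qed

lemma act_diff_p: "act sm T (p-q) m = act sm T p m - act sm T q m"
  by (metis diff_conv_add_uminus act_add_p act_minus_p)

lemma act_sum_p: "act sm T (sum f A) m = (\<Sum>a\<in>A. act sm T (f a) m)"
  by (rule additive_sum) (rule act_add_p)

lemma act_add_m: "act sm T p (x+y) = act sm T p x + act sm T p y"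
  by (simp add: act_def Tp_add sm_addr sum.distrib)

lemma act_0m[simp]: "act sm T p 0 = 0"
  using act_add_m[of p 0 0] by simp

lemma act_const[simp]: "act sm T [:c:] m = sm c m"
  by (simp add: act_def)

lemma act_pCons0: "act sm T (pCons 0 s) m = act sm T s (T m)"
proof -
  have d: "degree (pCons 0 s) \<le> Suc (degree s)" by (simp add: degree_pCons_le)
  have "act sm T (pCons 0 s) m = (\<Sum>i\<le>Suc (degree s). sm (coeff (pCons 0 s) i) ((T^^i) m))"
    by (rule act_bound[OF d])
  also have "\<dots> = sm (coeff (pCons 0 s) 0) ((T^^0) m) + (\<Sum>i\<le>degree s. sm (coeff (pCons 0 s) (Suc i)) ((T^^(Suc i)) m))"
    by (rule sum.atMost_Suc_shift)
  also have "\<dots> = (\<Sum>i\<le>degree s. sm (coeff s i) ((T^^i) (T m)))"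
    by (simp only: coeff_pCons_0 coeff_pCons_Suc sm_zl funpow_Suc_right comp_def add_0_left)
  finally show ?thesis by (simp add: act_def)
qed

lemma act_shiftr: "act sm T (shiftr j s) m = act sm T s ((T^^j) m)"
proof (induction j arbitrary: m)
  case 0 then show ?case by (simp add: shiftr_def)
next
  case (Suc j)
  have "act sm T (shiftr (Suc j) s) m = act sm T (pCons 0 (shiftr j s)) m"
    by (simp add: shiftr_def)
  also have "\<dots> = act sm T s ((T^^j) (T m))" by (simp add: act_pCons0 Suc)
  also have "\<dots> = act sm T s ((T^^Suc j) m)" by (simp add: funpow_swap1)
  finally show ?case .
qed

lemma coeff_lmult: "coeff (lmult c s) k = c * coeff s k"
  by (simp add: lmult_def coeff_map_poly)

lemma degree_lmult: "degree (lmult c s) \<le> degree s"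
  by (rule degree_le) (auto simp: coeff_lmult coeff_eq_0)

lemma act_lmult: "act sm T (lmult c s) m = sm c (act sm T s m)"
proof -
  have "act sm T (lmult c s) m = (\<Sum>i\<le>degree s. sm c (sm (coeff s i) ((T^^i) m)))"
    by (simp add: act_bound[OF degree_lmult] coeff_lmult sm_assoc)
  also have "\<dots> = sm c (act sm T s m)"
    unfolding act_def by (rule additive_sum[symmetric]) (rule sm_addr)
  finally show ?thesis .
qed

lemma coeff_skew_x: "coeff (skew_x \<sigma> \<delta> s) k = (case k of 0 \<Rightarrow> 0 | Suc k' \<Rightarrow> \<sigma> (coeff s k')) + \<delta> (coeff s k)"
  by (simp add: skew_x_def coeff_pCons coeff_map_poly split: nat.splits)

lemma degree_map_le: "f 0 = 0 \<Longrightarrow> degree (map_poly f s) \<le> degree s"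
  by (rule degree_le) (auto simp: coeff_map_poly coeff_eq_0)

lemma act_X: "act sm T (skew_x \<sigma> \<delta> s) m = T (act sm T s m)"
proof -
  have "act sm T (skew_x \<sigma> \<delta> s) m = act sm T (map_poly \<sigma> s) (T m) + act sm T (map_poly \<delta> s) m"
    by (simp add: skew_x_def act_add_p act_pCons0)
  also have "\<dots> = (\<Sum>i\<le>degree s. sm (\<sigma> (coeff s i)) ((T^^i) (T m))) + (\<Sum>i\<le>degree s. sm (\<delta> (coeff s i)) ((T^^i) m))"
    by (simp add: act_bound[OF degree_map_le] coeff_map_poly)
  also have "\<dots> = (\<Sum>i\<le>degree s. T (sm (coeff s i) ((T^^i) m)))"
    by (simp add: T_sm sum.distrib funpow_swap1)
  also have "\<dots> = T (act sm T s m)"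
    unfolding act_def by (rule additive_sum[symmetric]) (rule T_add)
  finally show ?thesis .
qed

lemma act_Xpow: "act sm T ((skew_x \<sigma> \<delta> ^^ i) s) m = (T^^i) (act sm T s m)"
  by (induction i) (auto simp: act_X)

lemma act_mult: "act sm T (skew_mult \<sigma> \<delta> p q) m = act sm T p (act sm T q m)"
proof -
  have "act sm T (skew_mult \<sigma> \<delta> p q) m =
     (\<Sum>i\<le>degree p. \<Sum>j\<le>degree q. sm (coeff p i) ((T^^i) (sm (coeff q j) ((T^^j) m))))"
    by (simp add: skew_mult_def act_sum_p act_shiftr act_lmult act_Xpow)
  also have "\<dots> = (\<Sum>i\<le>degree p. sm (coeff p i) ((T^^i) (act sm T q m)))"
    unfolding act_def
  proof (rule sum.cong[OF refl])
    fix i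
    show "(\<Sum>j\<le>degree q. sm (coeff p i) ((T^^i) (sm (coeff q j) ((T^^j) m)))) =
          sm (coeff p i) ((T^^i) (\<Sum>j\<le>degree q. sm (coeff q j) ((T^^j) m)))"
      by (rule additive_sum[symmetric]) (simp add: Tp_add sm_addr)
  qed
  also have "\<dots> = act sm T p (act sm T q m)" by (simp add: act_def)
  finally show ?thesis .
qed

end



lemma coeff_lmult': "coeff (lmult c s) k = c * coeff s k"
  by (simp add: lmult_def coeff_map_poly)

definition Tc :: "('a::division_ring \<Rightarrow> 'a) \<Rightarrow> ('a \<Rightarrow> 'a) \<Rightarrow> 'a \<Rightarrow> 'a \<Rightarrow> 'a" where
  "Tc \<sigma> \<delta> c b = \<sigma> b * c + \<delta> b"

context sd begin

lemma coeff_X: "coeff (skew_x \<sigma> \<delta> s) k = (case k of 0 \<Rightarrow> 0 | Suc k' \<Rightarrow> \<sigma> (coeff s k')) + \<delta> (coeff s k)"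
  by (simp add: skew_x_def coeff_pCons coeff_map_poly split: nat.splits)

lemma rep_poly: "rep \<sigma> \<delta> lmult (skew_x \<sigma> \<delta>)"
proof (intro rep.intro sd_axioms rep_axioms.intro)
  fix u v :: 'a and x y :: "'a poly"
  show "lmult u (x+y) = lmult u x + lmult u y" by (rule poly_eqI) (simp add: coeff_lmult' distrib_left)
  show "lmult (u+v) x = lmult u x + lmult v x" by (rule poly_eqI) (simp add: coeff_lmult' distrib_right)
  show "lmult u (lmult v x) = lmult (u*v) x" by (rule poly_eqI) (simp add: coeff_lmult' mult.assoc)
  show "lmult 1 x = x" by (rule poly_eqI) (simp add: coeff_lmult')
  show "skew_x \<sigma> \<delta> (x+y) = skew_x \<sigma> \<delta> x + skew_x \<sigma> \<delta> y"
    by (rule poly_eqI) (simp add: coeff_X s_add d_add add_ac split: nat.splits)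
  show "skew_x \<sigma> \<delta> (lmult u x) = lmult (\<sigma> u) (skew_x \<sigma> \<delta> x) + lmult (\<delta> u) x"
    by (rule poly_eqI) (simp add: coeff_X coeff_lmult' s_mult d_mult distrib_left add_ac split: nat.splits)
qed

lemma rep_fld: "rep \<sigma> \<delta> (*) (Tc \<sigma> \<delta> c)"
proof (intro rep.intro sd_axioms rep_axioms.intro)
  fix u v x y :: 'a
  show "u * (x+y) = u*x + u*y" by (simp add: distrib_left)
  show "(u+v)*x = u*x + v*x" by (simp add: distrib_right)
  show "u*(v*x) = (u*v)*x" by (simp add: mult.assoc)
  show "1 * x = x" by simp
  show "Tc \<sigma> \<delta> c (x+y) = Tc \<sigma> \<delta> c x + Tc \<sigma> \<delta> c y" by (simp add: Tc_def s_add d_add distrib_right add_ac)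
  show "Tc \<sigma> \<delta> c (u*x) = \<sigma> u * Tc \<sigma> \<delta> c x + \<delta> u * x"
    by (simp add: Tc_def s_mult d_mult distrib_left add_ac mult.assoc)
qed

end

sublocale sd \<subseteq> P: rep \<sigma> \<delta> lmult "skew_x \<sigma> \<delta>" by (rule rep_poly)

context sd begin

abbreviation mul (infixl "\<odot>" 70) where "mul p q \<equiv> skew_mult \<sigma> \<delta> p q"

lemma X_monom: "skew_x \<sigma> \<delta> (monom 1 i) = monom 1 (Suc i)"
  by (rule poly_eqI) (simp add: coeff_X split: nat.splits)

lemma Xpow_one: "(skew_x \<sigma> \<delta> ^^ i) [:1:] = monom 1 i"
  by (induction i) (simp_all add: monom_0 X_monom)

lemma act_one: "act lmult (skew_x \<sigma> \<delta>) r [:1:] = r"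
proof -
  have "act lmult (skew_x \<sigma> \<delta>) r [:1:] = (\<Sum>i\<le>degree r. monom (coeff r i) i)"
    unfolding act_def Xpow_one
    by (rule sum.cong[OF refl]) (rule poly_eqI, simp add: coeff_lmult')
  also have "\<dots> = r" by (rule poly_as_sum_of_monoms)
  finally show ?thesis .
qed

lemma mul_act: "p \<odot> q = act lmult (skew_x \<sigma> \<delta>) p q"
  using P.act_mult[of p q "[:1:]"] by (simp add: act_one)

lemma mul_assoc: "(p \<odot> q) \<odot> r = p \<odot> (q \<odot> r)"
proof -
  have "(p \<odot> q) \<odot> r = act lmult (skew_x \<sigma> \<delta>) (p \<odot> q) r" by (rule mul_act)
  also have "\<dots> = act lmult (skew_x \<sigma> \<delta>) p (act lmult (skew_x \<sigma> \<delta>) q r)" by (rule P.act_mult)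
  also have "\<dots> = p \<odot> (q \<odot> r)" by (simp only: mul_act)
  finally show ?thesis .
qed

lemma mul_add_left: "(p + q) \<odot> r = p \<odot> r + q \<odot> r"
  by (simp add: mul_act P.act_add_p)
lemma mul_diff_left: "(p - q) \<odot> r = p \<odot> r - q \<odot> r"
  by (simp add: mul_act P.act_diff_p)
lemma mul_add_right: "p \<odot> (q + r) = p \<odot> q + p \<odot> r"
  by (simp add: mul_act P.act_add_m)
lemma mul_diff_right: "p \<odot> (q - r) = p \<odot> q - p \<odot> r"
proof -
  have "p \<odot> (q - r) + p \<odot> r = p \<odot> q" by (simp add: mul_add_right[symmetric])
  then show ?thesis by (simp add: eq_diff_eq)
qed
lemma zero_mul[simp]: "0 \<odot> q = 0" by (simp add: mul_act)
lemma mul_zero[simp]: "p \<odot> 0 = 0" by (simp add: mul_act)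
lemma const_mul: "[:c:] \<odot> q = lmult c q" by (simp add: mul_act)
lemma one_mul[simp]: "[:1:] \<odot> q = q" by (simp add: const_mul P.sm_one)
lemma mul_one[simp]: "q \<odot> [:1:] = q" by (simp add: mul_act act_one)

lemma degree_X: "degree (skew_x \<sigma> \<delta> t) \<le> Suc (degree t)"
  by (rule degree_le) (auto simp: coeff_X coeff_eq_0 split: nat.splits)

lemma X_coeff_top: "degree t \<le> D \<Longrightarrow> coeff (skew_x \<sigma> \<delta> t) (Suc D) = \<sigma> (coeff t D)"
  by (simp add: coeff_X coeff_eq_0)

lemma Xpow_deg: "degree ((skew_x \<sigma> \<delta> ^^ i) t) \<le> degree t + i \<and>
   coeff ((skew_x \<sigma> \<delta> ^^ i) t) (degree t + i) = (\<sigma>^^i) (lead_coeff t)"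
proof (induction i)
  case 0 then show ?case by simp
next
  case (Suc i)
  let ?t = "(skew_x \<sigma> \<delta> ^^ i) t"
  have "degree (skew_x \<sigma> \<delta> ?t) \<le> degree t + Suc i"
    using degree_X[of ?t] Suc by simp
  moreover have "coeff (skew_x \<sigma> \<delta> ?t) (Suc (degree t + i)) = \<sigma> (coeff ?t (degree t + i))"
    using Suc by (intro X_coeff_top) simp
  ultimately show ?case using Suc by simp
qed

lemma mul_deg:
  assumes p: "p \<noteq> 0" and q: "q \<noteq> 0"
  shows "degree (p \<odot> q) = degree p + degree q \<and>
         lead_coeff (p \<odot> q) = lead_coeff p * (\<sigma>^^degree p) (lead_coeff q)"
proof -
  let ?f = "\<lambda>i. lmult (coeff p i) ((skew_x \<sigma> \<delta> ^^ i) q)"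
  have e: "p \<odot> q = (\<Sum>i\<le>degree p. ?f i)" by (simp add: mul_act act_def)
  have dle: "degree (p \<odot> q) \<le> degree p + degree q"
    unfolding e
  proof (rule degree_sum_le)
    fix i assume "i \<in> {..degree p}"
    then have "degree ((skew_x \<sigma> \<delta> ^^ i) q) \<le> degree p + degree q" using Xpow_deg[of i q] by auto
    then show "degree (?f i) \<le> degree p + degree q" using P.degree_lmult order_trans by blast
  qed simp
  have c: "coeff (p \<odot> q) (degree p + degree q) = lead_coeff p * (\<sigma>^^degree p) (lead_coeff q)"
  proof -
    have "coeff (p \<odot> q) (degree p + degree q) = (\<Sum>i\<le>degree p. coeff (?f i) (degree p + degree q))"
      by (simp add: e coeff_sum)
    also have "\<dots> = (\<Sum>i\<in>{degree p}. coeff (?f i) (degree p + degree q))"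
    proof (rule sum.mono_neutral_right)
      show "\<forall>i\<in>{..degree p} - {degree p}. coeff (?f i) (degree p + degree q) = 0"
      proof
        fix i assume "i \<in> {..degree p} - {degree p}"
        then have "i < degree p" by auto
        then have "degree ((skew_x \<sigma> \<delta> ^^ i) q) < degree p + degree q" using Xpow_deg[of i q] by auto
        then show "coeff (?f i) (degree p + degree q) = 0" by (simp add: coeff_lmult' coeff_eq_0)
      qed
    qed auto
    also have "\<dots> = lead_coeff p * (\<sigma>^^degree p) (lead_coeff q)"
      using Xpow_deg[of "degree p" q] by (simp add: coeff_lmult' add.commute)
    finally show ?thesis .
  qed
  have nz: "lead_coeff p * (\<sigma>^^degree p) (lead_coeff q) \<noteq> 0"
    using p q spow_eq0[of "degree p" "lead_coeff q"] by auto
  have "degree p + degree q \<le> degree (p \<odot> q)" using c nz by (intro le_degree) simp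
  with dle have "degree (p \<odot> q) = degree p + degree q" by simp
  with c show ?thesis by simp
qed

lemma mul_nz: "p \<noteq> 0 \<Longrightarrow> q \<noteq> 0 \<Longrightarrow> p \<odot> q \<noteq> 0"
  using mul_deg[of p q] spow_eq0 by (metis leading_coeff_0_iff mult_eq_0_iff)

lemma mul_cancel: assumes "a \<odot> P = b \<odot> P" "P \<noteq> 0" shows "a = b"
proof (rule ccontr)
  assume "a \<noteq> b"
  then have "(a - b) \<odot> P \<noteq> 0" using assms(2) mul_nz by simp
  with assms(1) show False by (simp add: mul_diff_left)
qed

lemma monic_mul: "lead_coeff p = 1 \<Longrightarrow> lead_coeff q = 1 \<Longrightarrow>
   lead_coeff (p \<odot> q) = 1 \<and> degree (p \<odot> q) = degree p + degree q"
  using mul_deg[of p q] by (cases "p = 0"; cases "q = 0") auto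

lemma div_monic:
  assumes G: "lead_coeff G = 1"
  shows "\<exists>Q R. F = Q \<odot> G + R \<and> (R = 0 \<or> degree R < degree G)"
proof (induction "degree F" arbitrary: F rule: less_induct)
  case less
  show ?case
  proof (cases "F = 0 \<or> degree F < degree G")
    case True then show ?thesis by (intro exI[of _ 0] exI[of _ F]) auto
  next
    case False
    then have F0: "F \<noteq> 0" and dG: "degree G \<le> degree F" by auto
    define k where "k = degree F - degree G"
    define M where "M = monom (lead_coeff F) k"
    have G0: "G \<noteq> 0" using G by auto
    have M0: "M \<noteq> 0" using F0 by (simp add: M_def)
    have dM: "degree M = k" and lcM: "coeff M k = lead_coeff F"
      using F0 by (simp_all add: M_def degree_monom_eq)
    have dMG: "degree (M \<odot> G) = degree F" and lMG: "lead_coeff (M \<odot> G) = lead_coeff F"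
    proof -
      have kk: "k + degree G = degree F" using dG by (simp add: k_def)
      show "degree (M \<odot> G) = degree F" "lead_coeff (M \<odot> G) = lead_coeff F"
        using mul_deg[OF M0 G0] G by (simp_all add: dM lcM kk, metis)
    qed
    define F' where "F' = F - M \<odot> G"
    show ?thesis
    proof (cases "F' = 0")
      case True then show ?thesis by (intro exI[of _ M] exI[of _ 0]) (simp add: F'_def)
    next
      case False
      have "degree F' \<le> degree F" unfolding F'_def using dMG by (intro degree_diff_le) auto
      moreover have "coeff F' (degree F) = 0" unfolding F'_def using lMG dMG by simp
      ultimately have "degree F' < degree F" using False
        by (metis le_neq_implies_less leading_coeff_0_iff)
      from less[OF this] obtain Q R where QR: "F' = Q \<odot> G + R" "R = 0 \<or> degree R < degree G" by blast
      have "F = (Q + M) \<odot> G + R" using QR(1) by (simp add: F'_def mul_add_left algebra_simps)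
      then show ?thesis using QR(2) by blast
    qed
  qed
qed

end



definition evl :: "('a::division_ring \<Rightarrow> 'a) \<Rightarrow> ('a \<Rightarrow> 'a) \<Rightarrow> 'a \<Rightarrow> 'a poly \<Rightarrow> 'a" where
  "evl \<sigma> \<delta> c F = act (*) (Tc \<sigma> \<delta> c) F 1"

abbreviation lin :: "'a::ring_1 \<Rightarrow> 'a poly" where "lin c \<equiv> [:-c, 1:]"

definition cclosed :: "('a::division_ring \<Rightarrow> 'a) \<Rightarrow> ('a \<Rightarrow> 'a) \<Rightarrow> 'a set \<Rightarrow> bool" where
  "cclosed \<sigma> \<delta> S \<longleftrightarrow> (\<forall>x\<in>S. \<forall>\<beta>. \<beta> \<noteq> 0 \<longrightarrow> sd_conj \<sigma> \<delta> x \<beta> \<in> S)"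

context sd begin

abbreviation ev where "ev c F \<equiv> evl \<sigma> \<delta> c F"

lemma ev_mult: "ev c (p \<odot> q) = act (*) (Tc \<sigma> \<delta> c) p (ev c q)"
  unfolding evl_def by (rule rep.act_mult[OF rep_fld])

lemma Tc_conj: "\<beta> \<noteq> 0 \<Longrightarrow> Tc \<sigma> \<delta> c (u * \<beta>) = Tc \<sigma> \<delta> (sd_conj \<sigma> \<delta> c \<beta>) u * \<beta>"
  by (simp add: Tc_def sd_conj_def s_mult d_mult distrib_left distrib_right mult.assoc add_ac)

lemma Tpow_conj: "\<beta> \<noteq> 0 \<Longrightarrow> (Tc \<sigma> \<delta> c ^^ i) (u * \<beta>) = (Tc \<sigma> \<delta> (sd_conj \<sigma> \<delta> c \<beta>) ^^ i) u * \<beta>"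
  by (induction i) (simp_all add: Tc_conj)

lemma act_conj: "\<beta> \<noteq> 0 \<Longrightarrow> act (*) (Tc \<sigma> \<delta> c) p (u * \<beta>) = act (*) (Tc \<sigma> \<delta> (sd_conj \<sigma> \<delta> c \<beta>)) p u * \<beta>"
  by (simp add: act_def Tpow_conj sum_distrib_right mult.assoc)

lemma ev_mult_nz: "ev c q \<noteq> 0 \<Longrightarrow> ev c (p \<odot> q) = ev (sd_conj \<sigma> \<delta> c (ev c q)) p * ev c q"
  using ev_mult[of c p q] act_conj[of "ev c q" c p 1] by (simp add: evl_def)

lemma ev_mult_z: "ev c q = 0 \<Longrightarrow> ev c (p \<odot> q) = 0"
  by (simp add: ev_mult rep.act_0m[OF rep_fld])

lemma ev_const[simp]: "ev c [:r:] = r"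
  by (simp add: evl_def rep.act_const[OF rep_fld])

lemma sum_le1: "(\<Sum>i\<le>(1::nat). f i) = f 0 + f 1"
  by (simp add: atMost_Suc add.commute)

lemma ev_lin: "ev c (lin d) = c - d"
  by (simp add: evl_def act_def sum_le1 Tc_def)

lemma ev_add: "ev c (p + q) = ev c p + ev c q"
  by (simp add: evl_def rep.act_add_p[OF rep_fld])

lemma lin_monic: "lead_coeff (lin d) = 1" "degree (lin d) = 1" by simp_all

lemma root_factor: assumes "ev d F = 0" shows "\<exists>Q. F = Q \<odot> lin d"
proof -
  obtain Q R where QR: "F = Q \<odot> lin d + R" "R = 0 \<or> degree R < degree (lin d)"
    using div_monic[of "lin d" F] by auto
  then have "degree R = 0" by auto
  then have R: "R = [:coeff R 0:]" by (simp add: degree_0_id)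
  have "ev d F = coeff R 0"
    using QR(1) by (subst (asm) R) (simp add: ev_add ev_mult_z ev_lin)
  with assms have "R = 0" using R by simp
  with QR show ?thesis by auto
qed

lemma conj_1[simp]: "sd_conj \<sigma> \<delta> c 1 = c" by (simp add: sd_conj_def)

lemma inv_cancel_left: "(\<gamma>::'a) \<noteq> 0 \<Longrightarrow> \<gamma> * (inverse \<gamma> * x) = x"
  by (simp add: mult.assoc[symmetric])

lemma conj_conj: "\<beta> \<noteq> 0 \<Longrightarrow> \<gamma> \<noteq> 0 \<Longrightarrow> sd_conj \<sigma> \<delta> (sd_conj \<sigma> \<delta> c \<gamma>) \<beta> = sd_conj \<sigma> \<delta> c (\<beta> * \<gamma>)"
  by (simp add: sd_conj_def s_mult d_mult nonzero_inverse_mult_distrib distrib_left distrib_right mult.assoc add_ac inv_cancel_left)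

lemma conj_inv: "\<beta> \<noteq> 0 \<Longrightarrow> sd_conj \<sigma> \<delta> (sd_conj \<sigma> \<delta> c \<beta>) (inverse \<beta>) = c"
  by (simp add: conj_conj)

lemma lin_mul: "lin u \<odot> lin c = [:u * c - \<delta> c, - u - \<sigma> c, 1:]"
  by (rule poly_eqI) (simp add: mul_act act_def sum_le1 coeff_lmult' coeff_X coeff_pCons s_minus d_minus
        algebra_simps split: nat.splits)

lemma swap:
  assumes cd: "c \<noteq> d"
  shows "lin (sd_conj \<sigma> \<delta> d (d - c)) \<odot> lin c = lin (sd_conj \<sigma> \<delta> c (c - d)) \<odot> lin d"
proof -
  define e where "e = d - c"
  have e0: "e \<noteq> 0" using cd by (simp add: e_def)
  define u where "u = sd_conj \<sigma> \<delta> d (d - c)"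
  define v where "v = sd_conj \<sigma> \<delta> c (c - d)"
  have cde: "c - d = - e" by (simp add: e_def)
  have v_eq: "v = \<sigma> e * c * inverse e + \<delta> e * inverse e"
    by (simp add: v_def sd_conj_def cde s_minus d_minus)
  have u_eq: "u = \<sigma> e * d * inverse e + \<delta> e * inverse e"
    by (simp add: u_def sd_conj_def e_def)
  have "u - v = \<sigma> e * (d - c) * inverse e"
    by (simp add: u_eq v_eq algebra_simps)
  also have "\<dots> = \<sigma> e" using e0 by (simp add: e_def[symmetric] mult.assoc)
  finally have uv: "v = u - \<sigma> e" by (simp add: algebra_simps)
  have ue: "u * e = \<sigma> e * d + \<delta> e"
    using e0 by (simp add: u_eq distrib_right mult.assoc)
  have k1: "u * c - v * d = - (u * e) + \<sigma> e * d"
    by (simp add: uv e_def algebra_simps)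
  have k2: "u * c - \<delta> c = v * d - \<delta> d"
  proof -
    have "u * c - v * d = - \<delta> e" by (simp add: k1 ue)
    also have "\<dots> = \<delta> c - \<delta> d" by (simp add: e_def d_diff)
    finally show ?thesis by (simp add: algebra_simps)
  qed
  have k3: "- u - \<sigma> c = - v - \<sigma> d" by (simp add: uv e_def s_diff algebra_simps)
  show ?thesis
    by (simp only: lin_mul u_def[symmetric] v_def[symmetric] k2 k3)
qed

fun plist :: "'a list \<Rightarrow> 'a poly" where
  "plist [] = [:1:]"
| "plist (c # cs) = lin c \<odot> plist cs"

lemma plist_append: "plist (xs @ ys) = plist xs \<odot> plist ys"
  by (induction xs) (simp_all add: mul_assoc)

lemma plist_snoc: "plist (xs @ [c]) = plist xs \<odot> lin c"
  by (simp add: plist_append)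

lemma plist_monic: "lead_coeff (plist cs) = 1 \<and> degree (plist cs) = length cs"
proof (induction cs)
  case Nil then show ?case by simp
next
  case (Cons c cs)
  then have h1: "lead_coeff (plist cs) = 1" and h2: "degree (plist cs) = length cs" by auto
  have "lead_coeff (lin c \<odot> plist cs) = 1 \<and> degree (lin c \<odot> plist cs) = degree (lin c) + degree (plist cs)"
    by (rule monic_mul) (simp_all add: h1)
  then have A: "lead_coeff (lin c \<odot> plist cs) = 1"
    and B0: "degree (lin c \<odot> plist cs) = degree (lin c) + degree (plist cs)" by blast+
  have B: "degree (lin c \<odot> plist cs) = Suc (length cs)" using B0 h2 by simp
  show ?case using A B by (simp only: plist.simps length_Cons)
qed

lemma plist_nz: "plist cs \<noteq> 0"
  using plist_monic[of cs] by auto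

lemma skew_pow_plist: "skew_pow \<sigma> \<delta> (lin a) r = plist (replicate r a)"
proof (induction r)
  case 0 then show ?case by simp
next
  case (Suc r)
  have "replicate (Suc r) a = replicate r a @ [a]" by (simp add: replicate_append_same)
  then show ?case using Suc by (simp add: plist_snoc)
qed

lemma ev_one[simp]: "ev c [:1:] = 1" by simp

end



context sd begin

lemma cclosedD: "cclosed \<sigma> \<delta> S \<Longrightarrow> x \<in> S \<Longrightarrow> \<beta> \<noteq> 0 \<Longrightarrow> sd_conj \<sigma> \<delta> x \<beta> \<in> S"
  by (simp add: cclosed_def)

lemma Qp:
  assumes S: "cclosed \<sigma> \<delta> S" and "set cs \<subseteq> S" and dS: "d \<in> S" and "ev d (plist cs) = 0"
  shows "\<exists>ns. set ns \<subseteq> S \<and> Suc (length ns) = length cs \<and> plist cs = plist ns \<odot> lin d"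
  using assms(2,4) dS
proof (induction cs arbitrary: d rule: rev_induct)
  case Nil then show ?case by simp
next
  case (snoc ck cs1)
  have pc: "plist (cs1 @ [ck]) = plist cs1 \<odot> lin ck" by (rule plist_snoc)
  have ckS: "ck \<in> S" and cs1S: "set cs1 \<subseteq> S" using snoc.prems by auto
  show ?case
  proof (cases "ck = d")
    case True then show ?thesis using cs1S by (intro exI[of _ cs1]) (simp add: plist_snoc)
  next
    case False
    define e where "e = d - ck"
    have e0: "e \<noteq> 0" using False by (simp add: e_def)
    have ee: "ev d (lin ck) = e" by (simp add: ev_lin e_def)
    define d' where "d' = sd_conj \<sigma> \<delta> d e"
    have "ev d (plist (cs1 @ [ck])) = ev d' (plist cs1) * e"
      unfolding pc using ev_mult_nz[of d "lin ck" "plist cs1"] ee e0 by (simp add: d'_def)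
    with snoc.prems e0 have z: "ev d' (plist cs1) = 0" by simp
    have d'S: "d' \<in> S" using S snoc.prems e0 by (simp add: d'_def cclosedD)
    obtain ns1 where ns1: "set ns1 \<subseteq> S" "Suc (length ns1) = length cs1" "plist cs1 = plist ns1 \<odot> lin d'"
      using snoc.IH[OF cs1S z d'S] by blast
    define c'' where "c'' = sd_conj \<sigma> \<delta> ck (ck - d)"
    have c''S: "c'' \<in> S" using S ckS False by (simp add: c''_def cclosedD)
    have sw: "lin d' \<odot> lin ck = lin c'' \<odot> lin d"
      using swap[of ck d] False by (simp add: d'_def c''_def e_def)
    have "plist (cs1 @ [ck]) = plist ns1 \<odot> (lin d' \<odot> lin ck)" by (simp add: pc ns1(3) mul_assoc)
    also have "\<dots> = plist (ns1 @ [c'']) \<odot> lin d" by (simp add: sw plist_snoc mul_assoc)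
    finally show ?thesis using ns1 c''S by (intro exI[of _ "ns1 @ [c'']"]) simp
  qed
qed

lemma root_in:
  assumes S: "cclosed \<sigma> \<delta> S" and "set ds \<subseteq> S" and "ev c (plist ds) = 0"
  shows "c \<in> S"
  using assms(2,3)
proof (induction ds arbitrary: c rule: rev_induct)
  case Nil then show ?case by simp
next
  case (snoc d ds1)
  show ?case
  proof (cases "c = d")
    case True then show ?thesis using snoc.prems by simp
  next
    case False
    define e where "e = c - d"
    have e0: "e \<noteq> 0" using False by (simp add: e_def)
    have "ev c (plist (ds1 @ [d])) = ev (sd_conj \<sigma> \<delta> c e) (plist ds1) * e"
      using ev_mult_nz[of c "lin d" "plist ds1"] e0 by (simp add: plist_snoc ev_lin e_def)
    with snoc.prems e0 have "ev (sd_conj \<sigma> \<delta> c e) (plist ds1) = 0" by simp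
    then have "sd_conj \<sigma> \<delta> c e \<in> S" using snoc by simp
    then have "sd_conj \<sigma> \<delta> (sd_conj \<sigma> \<delta> c e) (inverse e) \<in> S" using S e0 by (simp add: cclosedD)
    then show ?thesis using e0 by (simp add: conj_inv)
  qed
qed

lemma common_mult:
  assumes S: "cclosed \<sigma> \<delta> S" and "set cs \<subseteq> S" and "set ds \<subseteq> S"
  shows "\<exists>ts K. set ts \<subseteq> S \<and> length ts \<le> length ds \<and> plist ts \<odot> plist cs = K \<odot> plist ds"
  using assms(2,3)
proof (induction ds arbitrary: cs rule: rev_induct)
  case Nil then show ?case by (intro exI[of _ "[]"] exI[of _ "plist cs"]) simp
next
  case (snoc d ds1)
  have dS: "d \<in> S" and ds1S: "set ds1 \<subseteq> S" using snoc.prems by auto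
  show ?case
  proof (cases "ev d (plist cs) = 0")
    case True
    obtain ns where ns: "set ns \<subseteq> S" "plist cs = plist ns \<odot> lin d"
      using Qp[OF S snoc.prems(1) dS True] by blast
    obtain ts1 K where t: "set ts1 \<subseteq> S" "length ts1 \<le> length ds1" "plist ts1 \<odot> plist ns = K \<odot> plist ds1"
      using snoc.IH[OF ns(1) ds1S] by blast
    have "plist ts1 \<odot> plist cs = K \<odot> plist (ds1 @ [d])"
      by (simp add: ns(2) plist_snoc mul_assoc[symmetric] t(3))
    then show ?thesis using t by (intro exI[of _ ts1] exI[of _ K]) simp
  next
    case False
    define e where "e = ev d (plist cs)"
    define d' where "d' = sd_conj \<sigma> \<delta> d e"
    have d'S: "d' \<in> S" using S dS False by (simp add: d'_def e_def cclosedD)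
    have "ev d (plist (d' # cs)) = ev d' (lin d') * e"
      using ev_mult_nz[of d "plist cs" "lin d'"] False by (simp add: e_def d'_def)
    then have z: "ev d (plist (d' # cs)) = 0" by (simp add: ev_lin)
    have dcs: "set (d' # cs) \<subseteq> S" using d'S snoc.prems by auto
    obtain ns where ns: "set ns \<subseteq> S" "plist (d' # cs) = plist ns \<odot> lin d"
      using Qp[OF S dcs dS z] by blast
    obtain ts1 K where t: "set ts1 \<subseteq> S" "length ts1 \<le> length ds1" "plist ts1 \<odot> plist ns = K \<odot> plist ds1"
      using snoc.IH[OF ns(1) ds1S] by blast
    have "plist (ts1 @ [d']) \<odot> plist cs = plist ts1 \<odot> plist (d' # cs)"
      by (simp add: plist_snoc mul_assoc)
    also have "\<dots> = K \<odot> plist (ds1 @ [d])"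
      by (simp only: ns(2) plist_snoc mul_assoc[symmetric] t(3))
    finally show ?thesis using t d'S by (intro exI[of _ "ts1 @ [d']"] exI[of _ K]) simp
  qed
qed

lemma L1:
  assumes A: "cclosed \<sigma> \<delta> A" and B: "cclosed \<sigma> \<delta> B" and AB: "A \<inter> B = {}"
    and cA: "c \<in> A" and "set ds \<subseteq> B" and "P \<odot> lin c = K \<odot> plist ds"
  shows "\<exists>ds' K'. set ds' \<subseteq> B \<and> length ds' = length ds \<and> P = K' \<odot> plist ds'"
  using assms(5,6) cA
proof (induction ds arbitrary: P K c rule: rev_induct)
  case Nil then show ?case by (intro exI[of _ "[]"] exI[of _ P]) simp
next
  case (snoc d ds1)
  have dB: "d \<in> B" and ds1B: "set ds1 \<subseteq> B" using snoc.prems by auto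
  have cd: "c \<noteq> d" using AB snoc.prems dB by auto
  define e where "e = d - c"
  have e0: "e \<noteq> 0" using cd by (simp add: e_def)
  define d' where "d' = sd_conj \<sigma> \<delta> d e"
  have d'B: "d' \<in> B" using B dB e0 by (simp add: d'_def cclosedD)
  have "ev d (K \<odot> plist (ds1 @ [d])) = 0"
    by (simp add: plist_snoc mul_assoc[symmetric] ev_mult_z ev_lin)
  moreover have "ev d (P \<odot> lin c) = ev d' P * e"
    using ev_mult_nz[of d "lin c" P] e0 by (simp add: ev_lin e_def d'_def)
  ultimately have "ev d' P = 0" using snoc.prems e0 by simp
  then obtain P1 where P1: "P = P1 \<odot> lin d'" using root_factor by blast
  define c' where "c' = sd_conj \<sigma> \<delta> c (c - d)"
  have c'A: "c' \<in> A" using A snoc.prems cd by (simp add: c'_def cclosedD)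
  have sw: "lin d' \<odot> lin c = lin c' \<odot> lin d"
    using swap[OF cd] by (simp add: d'_def c'_def e_def)
  have "(P1 \<odot> lin c') \<odot> lin d = (K \<odot> plist ds1) \<odot> lin d"
    using snoc.prems(2) by (simp add: P1 mul_assoc sw plist_snoc)
  then have eq: "P1 \<odot> lin c' = K \<odot> plist ds1" by (rule mul_cancel) simp
  obtain ds1' K' where h: "set ds1' \<subseteq> B" "length ds1' = length ds1" "P1 = K' \<odot> plist ds1'"
    using snoc.IH[OF ds1B eq c'A] by blast
  have "P = K' \<odot> plist (ds1' @ [d'])" by (simp add: P1 h(3) plist_snoc mul_assoc)
  then show ?case using h d'B by (intro exI[of _ "ds1' @ [d']"] exI[of _ K']) simp
qed

lemma L:
  assumes A: "cclosed \<sigma> \<delta> A" and B: "cclosed \<sigma> \<delta> B" and AB: "A \<inter> B = {}"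
    and "set cs \<subseteq> A" and "set ds \<subseteq> B" and "P \<odot> plist cs = K \<odot> plist ds"
  shows "\<exists>ds' K'. set ds' \<subseteq> B \<and> length ds' = length ds \<and> P = K' \<odot> plist ds'"
  using assms(4-6)
proof (induction cs arbitrary: ds K rule: rev_induct)
  case Nil then show ?case by (intro exI[of _ ds] exI[of _ K]) simp
next
  case (snoc c cs1)
  have "(P \<odot> plist cs1) \<odot> lin c = K \<odot> plist ds"
    using snoc.prems(3) by (simp add: plist_snoc mul_assoc)
  then obtain ds1 K1 where h: "set ds1 \<subseteq> B" "length ds1 = length ds" "P \<odot> plist cs1 = K1 \<odot> plist ds1"
    using L1[OF A B AB _ snoc.prems(2)] snoc.prems(1) by fastforce
  obtain ds' K' where h2: "set ds' \<subseteq> B" "length ds' = length ds1" "P = K' \<odot> plist ds'"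
    using snoc.IH[OF _ h(1) h(3)] snoc.prems(1) by auto
  then show ?case using h by auto
qed

lemma ore1:
  assumes A: "cclosed \<sigma> \<delta> A" and B: "cclosed \<sigma> \<delta> B" and AB: "A \<inter> B = {}"
    and "c \<in> A" and "set ds \<subseteq> B"
  shows "\<exists>ds' c'. c' \<in> A \<and> set ds' \<subseteq> B \<and> length ds' = length ds \<and> plist ds' \<odot> lin c = lin c' \<odot> plist ds"
  using assms(4,5)
proof (induction ds)
  case Nil then show ?case by (intro exI[of _ "[]"] exI[of _ c]) simp
next
  case (Cons d ds1)
  obtain ds1' c'' where h: "c'' \<in> A" "set ds1' \<subseteq> B" "length ds1' = length ds1"
      "plist ds1' \<odot> lin c = lin c'' \<odot> plist ds1"
    using Cons by auto
  have dB: "d \<in> B" using Cons.prems by simp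
  have cd: "c'' \<noteq> d" using AB h(1) dB by auto
  define d' where "d' = sd_conj \<sigma> \<delta> d (d - c'')"
  define c' where "c' = sd_conj \<sigma> \<delta> c'' (c'' - d)"
  have d'B: "d' \<in> B" using B dB cd by (simp add: d'_def cclosedD)
  have c'A: "c' \<in> A" using A h(1) cd by (simp add: c'_def cclosedD)
  have sw: "lin d' \<odot> lin c'' = lin c' \<odot> lin d" using swap[OF cd] by (simp add: d'_def c'_def)
  have "plist (d' # ds1') \<odot> lin c = lin d' \<odot> (lin c'' \<odot> plist ds1)"
    by (simp add: mul_assoc h(4))
  also have "\<dots> = lin c' \<odot> plist (d # ds1)" by (simp add: mul_assoc[symmetric] sw)
  finally show ?case using h d'B c'A by (intro exI[of _ "d' # ds1'"] exI[of _ c']) simp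
qed

lemma ore:
  assumes A: "cclosed \<sigma> \<delta> A" and B: "cclosed \<sigma> \<delta> B" and AB: "A \<inter> B = {}"
    and "set cs \<subseteq> A" and "set ds \<subseteq> B"
  shows "\<exists>cs' ds'. set ds' \<subseteq> B \<and> length cs' = length cs \<and> length ds' = length ds \<and>
     plist ds' \<odot> plist cs = plist cs' \<odot> plist ds"
  using assms(4)
proof (induction cs)
  case Nil then show ?case using assms(5) by (intro exI[of _ "[]"] exI[of _ ds]) simp
next
  case (Cons c cs1)
  obtain cs1' ds1 where h: "set ds1 \<subseteq> B" "length cs1' = length cs1" "length ds1 = length ds"
     "plist ds1 \<odot> plist cs1 = plist cs1' \<odot> plist ds"
    using Cons by auto
  obtain ds' c' where h2: "c' \<in> A" "set ds' \<subseteq> B" "length ds' = length ds1" "plist ds' \<odot> lin c = lin c' \<odot> plist ds1"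
    using ore1[OF A B AB _ h(1), of c] Cons.prems by auto
  have "plist ds' \<odot> plist (c # cs1) = plist (c' # cs1') \<odot> plist ds"
    by (simp add: mul_assoc[symmetric] h2(4)) (simp add: mul_assoc h(4))
  then show ?case using h h2 by (intro exI[of _ "c' # cs1'"] exI[of _ ds']) simp
qed

end



context sd begin

lemma ideal_mem: "F \<in> ideal_of \<sigma> \<delta> \<Omega> \<longleftrightarrow> (\<forall>P\<in>\<Omega>. \<exists>Q. F = Q \<odot> P)"
  by (simp add: ideal_of_def right_dvd_def)

lemma ideal_lmul: "F \<in> ideal_of \<sigma> \<delta> \<Omega> \<Longrightarrow> K \<odot> F \<in> ideal_of \<sigma> \<delta> \<Omega>"
  unfolding ideal_mem by (metis mul_assoc)

lemma ideal_diff: "F \<in> ideal_of \<sigma> \<delta> \<Omega> \<Longrightarrow> G \<in> ideal_of \<sigma> \<delta> \<Omega> \<Longrightarrow> F - G \<in> ideal_of \<sigma> \<delta> \<Omega>"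
  unfolding ideal_mem by (metis mul_diff_left)

lemma ideal_0: "0 \<in> ideal_of \<sigma> \<delta> \<Omega>"
  unfolding ideal_mem by (metis zero_mul)

lemma ideal_Un: "ideal_of \<sigma> \<delta> (X \<union> Y) = ideal_of \<sigma> \<delta> X \<inter> ideal_of \<sigma> \<delta> Y"
  by (auto simp: ideal_of_def)

lemma min_poly_props:
  assumes ne: "ideal_of \<sigma> \<delta> \<Omega> \<noteq> {0}"
  shows "min_poly \<sigma> \<delta> \<Omega> \<in> ideal_of \<sigma> \<delta> \<Omega> \<and> lead_coeff (min_poly \<sigma> \<delta> \<Omega>) = 1 \<and>
    (\<forall>G\<in>ideal_of \<sigma> \<delta> \<Omega>. G \<noteq> 0 \<longrightarrow> degree (min_poly \<sigma> \<delta> \<Omega>) \<le> degree G)"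
proof -
  let ?I = "ideal_of \<sigma> \<delta> \<Omega>"
  obtain G0 where G0: "G0 \<in> ?I" "G0 \<noteq> 0" using ne ideal_0 by blast
  obtain G where G: "G \<in> ?I \<and> G \<noteq> 0" and Gmin: "\<forall>H. H \<in> ?I \<and> H \<noteq> 0 \<longrightarrow> degree G \<le> degree H"
    using ex_has_least_nat[of "\<lambda>H. H \<in> ?I \<and> H \<noteq> 0" G0 degree] G0 by blast
  define c where "c = inverse (lead_coeff G)"
  have c0: "c \<noteq> 0" using G by (simp add: c_def)
  define G' where "G' = [:c:] \<odot> G"
  have G'I: "G' \<in> ?I" using G by (simp add: G'_def ideal_lmul)
  have m: "degree ([:c:] \<odot> G) = degree [:c:] + degree G \<and>
     lead_coeff ([:c:] \<odot> G) = lead_coeff [:c:] * (\<sigma>^^degree [:c:]) (lead_coeff G)"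
    by (rule mul_deg) (use c0 G in auto)
  then have dG': "degree G' = degree G" unfolding G'_def by simp
  have m1: "degree ([:c:] \<odot> G) = degree G" and m2: "lead_coeff ([:c:] \<odot> G) = c * lead_coeff G"
    using m by auto
  have l1: "coeff G' (degree G) = c * lead_coeff G" unfolding G'_def by (metis m1 m2)
  then have lG': "lead_coeff G' = 1" using dG' G by (simp add: c_def)
  have "\<exists>F. F \<in> ?I \<and> lead_coeff F = 1 \<and> (\<forall>H\<in>?I. H \<noteq> 0 \<longrightarrow> degree F \<le> degree H)"
    using G'I lG' dG' Gmin by (intro exI[of _ G']) auto
  then show ?thesis unfolding min_poly_def using ne by (simp only: if_False) (rule someI_ex)
qed

lemma indep_lower:
  assumes "P_independent \<sigma> \<delta> \<Omega>" "H \<in> ideal_of \<sigma> \<delta> \<Omega>" "H \<noteq> 0"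
  shows "(\<Sum>P\<in>\<Omega>. degree P) \<le> degree H"
  using assms min_poly_props[of \<Omega>] by (auto simp: P_independent_def)

lemma exact_div:
  assumes ind: "P_independent \<sigma> \<delta> \<Omega>" and E: "plist es \<in> ideal_of \<sigma> \<delta> \<Omega>"
    and len: "length es \<le> (\<Sum>P\<in>\<Omega>. degree P)" and F: "F \<in> ideal_of \<sigma> \<delta> \<Omega>"
  shows "\<exists>Q. F = Q \<odot> plist es"
proof -
  obtain Q R where QR: "F = Q \<odot> plist es + R" "R = 0 \<or> degree R < degree (plist es)"
    using div_monic[of "plist es" F] plist_monic by blast
  have "R = F - Q \<odot> plist es" using QR(1) by simp
  then have RI: "R \<in> ideal_of \<sigma> \<delta> \<Omega>" using F E by (simp add: ideal_diff ideal_lmul)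
  have "R = 0"
  proof (rule ccontr)
    assume "R \<noteq> 0"
    then have "(\<Sum>P\<in>\<Omega>. degree P) \<le> degree R" using indep_lower[OF ind RI] by simp
    moreover have "degree R < length es" using QR(2) \<open>R \<noteq> 0\<close> plist_monic[of es] by simp
    ultimately show False using len by simp
  qed
  then show ?thesis using QR(1) by auto
qed

lemma build:
  fixes k :: nat
  assumes S: "cclosed \<sigma> \<delta> S" and aS: "\<forall>i\<in>{1..k}. a i \<in> S"
  shows "\<exists>es. set es \<subseteq> S \<and> length es \<le> (\<Sum>i\<in>{1..k}. r i) \<and>
     (\<forall>i\<in>{1..k}. \<exists>Q. plist es = Q \<odot> plist (replicate (r i) (a i)))"
  using aS
proof (induction k)
  case 0 then show ?case by (intro exI[of _ "[]"]) simp
next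
  case (Suc k)
  obtain es where es: "set es \<subseteq> S" "length es \<le> (\<Sum>i\<in>{1..k}. r i)"
      "\<forall>i\<in>{1..k}. \<exists>Q. plist es = Q \<odot> plist (replicate (r i) (a i))"
    using Suc by auto
  have ak: "a (Suc k) \<in> S" using Suc.prems by simp
  obtain ts K where t: "set ts \<subseteq> S" "length ts \<le> length (replicate (r (Suc k)) (a (Suc k)))"
      "plist ts \<odot> plist es = K \<odot> plist (replicate (r (Suc k)) (a (Suc k)))"
  proof -
    have "set (replicate (r (Suc k)) (a (Suc k))) \<subseteq> S" using ak by auto
    then show ?thesis using common_mult[OF S es(1), of "replicate (r (Suc k)) (a (Suc k))"] that by blast
  qed
  have "\<forall>i\<in>{1..Suc k}. \<exists>Q. plist (ts @ es) = Q \<odot> plist (replicate (r i) (a i))"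
  proof
    fix i assume i: "i \<in> {1..Suc k}"
    show "\<exists>Q. plist (ts @ es) = Q \<odot> plist (replicate (r i) (a i))"
    proof (cases "i = Suc k")
      case True then show ?thesis using t(3) by (simp add: plist_append) blast
    next
      case False
      then have "i \<in> {1..k}" using i by auto
      then obtain Q where "plist es = Q \<odot> plist (replicate (r i) (a i))" using es(3) by blast
      then show ?thesis by (simp add: plist_append mul_assoc[symmetric]) blast
    qed
  qed
  moreover have "length (ts @ es) \<le> (\<Sum>i\<in>{1..Suc k}. r i)" using t(2) es(2) by simp
  ultimately show ?case using t(1) es(1) by (intro exI[of _ "ts @ es"]) auto
qed

lemma conj_ex_trans:
  assumes "sd_conjugate \<sigma> \<delta> a x" "\<beta> \<noteq> 0" shows "sd_conjugate \<sigma> \<delta> a (sd_conj \<sigma> \<delta> x \<beta>)"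
proof -
  obtain \<gamma> where g: "\<gamma> \<noteq> 0" "x = sd_conj \<sigma> \<delta> a \<gamma>" using assms(1) by (auto simp: sd_conjugate_def)
  then have "sd_conj \<sigma> \<delta> x \<beta> = sd_conj \<sigma> \<delta> a (\<beta> * \<gamma>)" using assms(2) by (simp add: conj_conj)
  moreover have "\<beta> * \<gamma> \<noteq> 0" using g assms(2) by simp
  ultimately show ?thesis unfolding sd_conjugate_def by blast
qed

lemma conj_sym: "sd_conjugate \<sigma> \<delta> a x \<Longrightarrow> sd_conjugate \<sigma> \<delta> x a"
  unfolding sd_conjugate_def by (metis conj_inv inverse_nonzero_iff_nonzero)

lemma conj_refl: "sd_conjugate \<sigma> \<delta> a a"
  unfolding sd_conjugate_def by (intro exI[of _ 1]) simp

lemma cls_closed: "cclosed \<sigma> \<delta> {x. \<exists>i\<in>I. sd_conjugate \<sigma> \<delta> (a i) x}"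
  unfolding cclosed_def using conj_ex_trans by blast

lemma ev_rep_root: "k \<ge> 1 \<Longrightarrow> ev c (plist (replicate k c)) = 0"
proof -
  assume "k \<ge> 1"
  then have "replicate k c = replicate (k - 1) c @ [c]"
    by (metis Suc_diff_1 less_le_trans zero_less_one replicate_append_same replicate_Suc)
  then show ?thesis by (simp add: plist_snoc ev_mult_z ev_lin)
qed

end



context sd begin

lemma deg_sum_img:
  fixes n :: nat
  assumes "card ((\<lambda>i. skew_pow \<sigma> \<delta> [:- a i, 1:] (r i)) ` {1..n}) = n"
  shows "(\<Sum>P\<in>(\<lambda>i. skew_pow \<sigma> \<delta> [:- a i, 1:] (r i)) ` {1..n}. degree P) = (\<Sum>i\<in>{1..n}. r i)"
proof -
  have inj: "inj_on (\<lambda>i. skew_pow \<sigma> \<delta> [:- a i, 1:] (r i)) {1..n}"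
    using assms by (intro eq_card_imp_inj_on) auto
  show ?thesis
    by (simp only: sum.reindex[OF inj] comp_def) (simp add: skew_pow_plist plist_monic)
qed

lemma side:
  fixes n :: nat
  assumes card: "card ((\<lambda>i. skew_pow \<sigma> \<delta> [:- a i, 1:] (r i)) ` {1..n}) = n"
    and ind: "P_independent \<sigma> \<delta> ((\<lambda>i. skew_pow \<sigma> \<delta> [:- a i, 1:] (r i)) ` {1..n})"
  shows "\<exists>es. set es \<subseteq> {x. \<exists>i\<in>{1..n}. sd_conjugate \<sigma> \<delta> (a i) x} \<and>
      length es = (\<Sum>i\<in>{1..n}. r i) \<and>
      plist es \<in> ideal_of \<sigma> \<delta> ((\<lambda>i. skew_pow \<sigma> \<delta> [:- a i, 1:] (r i)) ` {1..n})"
proof -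
  let ?S = "{x. \<exists>i\<in>{1..n}. sd_conjugate \<sigma> \<delta> (a i) x}"
  have aS: "\<forall>i\<in>{1..n}. a i \<in> ?S" using conj_refl by blast
  obtain es where es: "set es \<subseteq> ?S" "length es \<le> (\<Sum>i\<in>{1..n}. r i)"
     "\<forall>i\<in>{1..n}. \<exists>Q. plist es = Q \<odot> plist (replicate (r i) (a i))"
    using build[OF cls_closed aS] by blast
  have I: "plist es \<in> ideal_of \<sigma> \<delta> ((\<lambda>i. skew_pow \<sigma> \<delta> [:- a i, 1:] (r i)) ` {1..n})"
    using es(3) by (auto simp: ideal_mem skew_pow_plist)
  have "(\<Sum>i\<in>{1..n}. r i) \<le> degree (plist es)"
    using indep_lower[OF ind I plist_nz] deg_sum_img[OF card] by simp
  then have "length es = (\<Sum>i\<in>{1..n}. r i)" using es(2) plist_monic[of es] by simp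
  with es(1) I show ?thesis by blast
qed

lemma main:
  fixes a b :: "nat \<Rightarrow> 'a" and r s :: "nat \<Rightarrow> nat" and n m :: nat
  assumes "n \<ge> 1" and "m \<ge> 1"
    and "\<forall>i\<in>{1..n}. r i \<ge> 1" and "\<forall>j\<in>{1..m}. s j \<ge> 1"
    and cardA: "card ((\<lambda>i. skew_pow \<sigma> \<delta> [:- a i, 1:] (r i)) ` {1..n}) = n"
    and cardB: "card ((\<lambda>j. skew_pow \<sigma> \<delta> [:- b j, 1:] (s j)) ` {1..m}) = m"
    and indA: "P_independent \<sigma> \<delta> ((\<lambda>i. skew_pow \<sigma> \<delta> [:- a i, 1:] (r i)) ` {1..n})"
    and indB: "P_independent \<sigma> \<delta> ((\<lambda>j. skew_pow \<sigma> \<delta> [:- b j, 1:] (s j)) ` {1..m})"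
    and nc: "\<forall>i\<in>{1..n}. \<forall>j\<in>{1..m}. \<not> sd_conjugate \<sigma> \<delta> (a i) (b j)"
  shows "card ((\<lambda>i. skew_pow \<sigma> \<delta> [:- a i, 1:] (r i)) ` {1..n}
              \<union> (\<lambda>j. skew_pow \<sigma> \<delta> [:- b j, 1:] (s j)) ` {1..m}) = n + m
     \<and> P_independent \<sigma> \<delta> ((\<lambda>i. skew_pow \<sigma> \<delta> [:- a i, 1:] (r i)) ` {1..n}
              \<union> (\<lambda>j. skew_pow \<sigma> \<delta> [:- b j, 1:] (s j)) ` {1..m})"
proof -
  define Om where "Om = (\<lambda>i. skew_pow \<sigma> \<delta> [:- a i, 1:] (r i)) ` {1..n}"
  define Ps where "Ps = (\<lambda>j. skew_pow \<sigma> \<delta> [:- b j, 1:] (s j)) ` {1..m}"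
  define A where "A = {x. \<exists>i\<in>{1..n}. sd_conjugate \<sigma> \<delta> (a i) x}"
  define B where "B = {x. \<exists>j\<in>{1..m}. sd_conjugate \<sigma> \<delta> (b j) x}"
  define SR where "SR = (\<Sum>i\<in>{1..n}. r i)"
  define SS where "SS = (\<Sum>j\<in>{1..m}. s j)"
  have Acl: "cclosed \<sigma> \<delta> A" unfolding A_def by (rule cls_closed)
  have Bcl: "cclosed \<sigma> \<delta> B" unfolding B_def by (rule cls_closed)
  have AB: "A \<inter> B = {}"
  proof (rule ccontr)
    assume "A \<inter> B \<noteq> {}"
    then obtain x i j where ij: "i \<in> {1..n}" "j \<in> {1..m}" "sd_conjugate \<sigma> \<delta> (a i) x" "sd_conjugate \<sigma> \<delta> (b j) x"
      unfolding A_def B_def by blast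
    obtain \<gamma> where g: "\<gamma> \<noteq> 0" "x = sd_conj \<sigma> \<delta> (a i) \<gamma>" using ij(3) by (auto simp: sd_conjugate_def)
    have "sd_conjugate \<sigma> \<delta> x (b j)" using ij(4) by (rule conj_sym)
    then obtain \<eta> where e: "\<eta> \<noteq> 0" "b j = sd_conj \<sigma> \<delta> x \<eta>" by (auto simp: sd_conjugate_def)
    have "sd_conjugate \<sigma> \<delta> (a i) (b j)" using conj_ex_trans[OF ij(3) e(1)] e(2) by simp
    with nc ij show False by blast
  qed
  obtain esA where eA: "set esA \<subseteq> A" "length esA = SR" "plist esA \<in> ideal_of \<sigma> \<delta> Om"
    using side[OF cardA indA] unfolding A_def SR_def Om_def by blast
  obtain esB where eB: "set esB \<subseteq> B" "length esB = SS" "plist esB \<in> ideal_of \<sigma> \<delta> Ps"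
    using side[OF cardB indB] unfolding B_def SS_def Ps_def by blast
  have sumA: "(\<Sum>P\<in>Om. degree P) = SR" unfolding Om_def SR_def by (rule deg_sum_img[OF cardA])
  have sumB: "(\<Sum>P\<in>Ps. degree P) = SS" unfolding Ps_def SS_def by (rule deg_sum_img[OF cardB])
  have finO: "finite Om" and finP: "finite Ps" by (simp_all add: Om_def Ps_def)
  have disj: "Om \<inter> Ps = {}"
  proof (rule ccontr)
    assume "Om \<inter> Ps \<noteq> {}"
    then obtain i j where ij: "i \<in> {1..n}" "j \<in> {1..m}"
       "plist (replicate (r i) (a i)) = plist (replicate (s j) (b j))"
      using \<open>Om \<inter> Ps \<noteq> {}\<close> unfolding Om_def Ps_def skew_pow_plist by blast
    have "ev (a i) (plist (replicate (r i) (a i))) = 0" using assms(3) ij(1) by (simp add: ev_rep_root)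
    then have "ev (a i) (plist (replicate (s j) (b j))) = 0" using ij(3) by simp
    moreover have "set (replicate (s j) (b j)) \<subseteq> B" using ij(2) conj_refl[of "b j"] by (auto simp: B_def)
    ultimately have "a i \<in> B" using root_in[OF Bcl] by blast
    moreover have "a i \<in> A" using ij(1) conj_refl[of "a i"] by (auto simp: A_def)
    ultimately show False using AB by blast
  qed
  obtain cs' ds' where o: "set ds' \<subseteq> B" "length cs' = length esA" "length ds' = length esB"
     "plist ds' \<odot> plist esA = plist cs' \<odot> plist esB"
    using ore[OF Acl Bcl AB eA(1) eB(1)] by blast
  define M where "M = plist ds' \<odot> plist esA"
  have MI: "M \<in> ideal_of \<sigma> \<delta> (Om \<union> Ps)"
  proof -
    have "M \<in> ideal_of \<sigma> \<delta> Om" unfolding M_def using eA(3) by (rule ideal_lmul)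
    moreover have "M \<in> ideal_of \<sigma> \<delta> Ps" unfolding M_def o(4) using eB(3) by (rule ideal_lmul)
    ultimately show ?thesis unfolding ideal_Un by blast
  qed
  have Mmon: "lead_coeff M = 1 \<and> degree M = length ds' + length esA"
    unfolding M_def plist_append[symmetric] using plist_monic[of "ds' @ esA"] by (metis length_append)
  then have M0: "M \<noteq> 0" by auto
  have ne: "ideal_of \<sigma> \<delta> (Om \<union> Ps) \<noteq> {0}" using MI M0 by blast
  define F where "F = min_poly \<sigma> \<delta> (Om \<union> Ps)"
  have FI: "F \<in> ideal_of \<sigma> \<delta> (Om \<union> Ps)" and Fl: "lead_coeff F = 1"
    and Fmin: "\<forall>G\<in>ideal_of \<sigma> \<delta> (Om \<union> Ps). G \<noteq> 0 \<longrightarrow> degree F \<le> degree G"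
    using min_poly_props[OF ne] unfolding F_def by auto
  have F0: "F \<noteq> 0" using Fl by auto
  have up: "degree F \<le> SR + SS" using Fmin MI M0 Mmon o eA eB by auto
  have FA: "F \<in> ideal_of \<sigma> \<delta> Om" and FB: "F \<in> ideal_of \<sigma> \<delta> Ps" using FI ideal_Un by auto
  obtain Q where Q: "F = Q \<odot> plist esA" using exact_div[OF indA[folded Om_def] eA(3) _ FA] eA(2) sumA by auto
  obtain Q' where Q': "F = Q' \<odot> plist esB" using exact_div[OF indB[folded Ps_def] eB(3) _ FB] eB(2) sumB by auto
  obtain ds'' K' where L: "set ds'' \<subseteq> B" "length ds'' = length esB" "Q = K' \<odot> plist ds''"
    using L[OF Acl Bcl AB eA(1) eB(1), of Q Q'] Q Q' by auto
  have Q0: "Q \<noteq> 0" using F0 Q by auto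
  have K0: "K' \<noteq> 0" using Q0 L(3) by auto
  have "degree Q = degree K' + SS" using mul_deg[OF K0 plist_nz, of ds''] L(2) eB(2) plist_monic[of ds''] L(3)
    by simp
  then have "degree F = degree K' + SS + SR" using mul_deg[OF Q0 plist_nz, of esA] Q eA(2) plist_monic[of esA]
    by simp
  with up have degF: "degree F = SR + SS" by simp
  have card: "card (Om \<union> Ps) = n + m"
    using card_Un_disjoint[OF finO finP disj] cardA cardB by (simp add: Om_def Ps_def)
  have "P_independent \<sigma> \<delta> (Om \<union> Ps)"
    unfolding P_independent_def
    using finO finP ne degF sum.union_disjoint[OF finO finP disj, of degree] sumA sumB
    by (simp add: F_def)
  with card show ?thesis by (simp add: Om_def Ps_def)
qed

end

theorem mainTheorem7:
  fixes \<sigma> \<delta> :: "'a::division_ring \<Rightarrow> 'a"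
    and a b :: "nat \<Rightarrow> 'a" and r s :: "nat \<Rightarrow> nat" and n m :: nat
  assumes "ring_endo \<sigma>" and "sigma_derivation \<sigma> \<delta>"
    and "n \<ge> 1" and "m \<ge> 1"
    and "\<forall>i\<in>{1..n}. r i \<ge> 1" and "\<forall>j\<in>{1..m}. s j \<ge> 1"
    and "card ((\<lambda>i. skew_pow \<sigma> \<delta> [:- a i, 1:] (r i)) ` {1..n}) = n"
    and "card ((\<lambda>j. skew_pow \<sigma> \<delta> [:- b j, 1:] (s j)) ` {1..m}) = m"
    and "P_independent \<sigma> \<delta> ((\<lambda>i. skew_pow \<sigma> \<delta> [:- a i, 1:] (r i)) ` {1..n})"
    and "P_independent \<sigma> \<delta> ((\<lambda>j. skew_pow \<sigma> \<delta> [:- b j, 1:] (s j)) ` {1..m})"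
    and "\<forall>i\<in>{1..n}. \<forall>j\<in>{1..m}. \<not> sd_conjugate \<sigma> \<delta> (a i) (b j)"
  shows "card ((\<lambda>i. skew_pow \<sigma> \<delta> [:- a i, 1:] (r i)) ` {1..n}
              \<union> (\<lambda>j. skew_pow \<sigma> \<delta> [:- b j, 1:] (s j)) ` {1..m}) = n + m
     \<and> P_independent \<sigma> \<delta> ((\<lambda>i. skew_pow \<sigma> \<delta> [:- a i, 1:] (r i)) ` {1..n}
              \<union> (\<lambda>j. skew_pow \<sigma> \<delta> [:- b j, 1:] (s j)) ` {1..m})"
  by (rule sd.main[OF sd.intro[OF assms(1,2)] assms(3-11)])



end
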